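(* Fix positive integers $a$ and $b$. Let $B$ and $Z$ be independent random variables with $B\sim\mathrm{Beta}(a,b)$ and $Z\sim\mathrm{GGa}(a+b+1,2)$, and let $V=2BZ$. Then, as $t\to\infty$, $$\mathbb{P}(V>t)\sim c\Big(\frac{a+b+2}{2},a\Big)\,t^{-1+a-b}\exp(-t^2/4).$$
   Context: $\mathrm{Beta}(a,b)$ is the distribution with density proportional to $x^{a-1}(1-x)^{b-1}\mathbf{1}_{\{x\in[0,1]\}}$. $\mathrm{GGa}(\alpha,\beta)$ is the generalized gamma distribution with density proportional to $x^{\alpha-1}e^{-x^{\beta}}\mathbf{1}_{\{x>0\}}$. The constant is $c(\alpha,\beta)=\dfrac{\Gamma(2\alpha-2)}{2^{\beta-1}\Gamma(\alpha-1/2)\Gamma(\beta)}$. Notation $f(t)\sim g(t)$ means $f(t)/g(t)\to1$. *)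

theory Defs
  imports "HOL-Probability.Probability" "HOL-Library.Landau_Symbols"
begin

definition beta_kernel :: "real \<Rightarrow> real \<Rightarrow> real \<Rightarrow> real" where
  "beta_kernel a b x = indicator {0..1} x * x powr (a - 1) * (1 - x) powr (b - 1)"

definition beta_density :: "real \<Rightarrow> real \<Rightarrow> real \<Rightarrow> real" where
  "beta_density a b x = beta_kernel a b x / (LINT y|lborel. beta_kernel a b y)"

definition ggamma_kernel :: "real \<Rightarrow> real \<Rightarrow> real \<Rightarrow> real" where
  "ggamma_kernel \<alpha> \<beta> x = indicator {0<..} x * x powr (\<alpha> - 1) * exp (- (x powr \<beta>))"

definition ggamma_density :: "real \<Rightarrow> real \<Rightarrow> real \<Rightarrow> real" where
  "ggamma_density \<alpha> \<beta> x = ggamma_kernel \<alpha> \<beta> x / (LINT y|lborel. ggamma_kernel \<alpha> \<beta> y)"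

definition c_const :: "real \<Rightarrow> real \<Rightarrow> real" where
  "c_const \<alpha> \<beta> = Gamma (2 * \<alpha> - 2) / (2 powr (\<beta> - 1) * Gamma (\<alpha> - 1/2) * Gamma \<beta>)"

end

theory Submission
  imports Defs "HOL-Real_Asymp.Real_Asymp"
begin


lemma real_asymp_test:
  fixes y q :: real
  shows "((\<lambda>s. s\<^sup>2 - s\<^sup>2 * ((1 + q / s\<^sup>2) / (1 - y / s\<^sup>2))\<^sup>2) \<longlongrightarrow> -2*y - 2*q) at_top"
  by real_asymp

lemma Gamma_half_nat: "Gamma (real k + 1/2) = sqrt pi * fact (2*k) / (2^(2*k) * fact k)"
proof (induction k)
  case 0 then show ?case by (simp add: Gamma_one_half_real)
next
  case (Suc k)
  have "Gamma (real (Suc k) + 1/2) = (real k + 1/2) * Gamma (real k + 1/2)"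
    using Gamma_plus1[of "real k + 1/2"]
    by (simp add: add_ac nonpos_Ints_def)
  also have "\<dots> = (real k + 1/2) * (sqrt pi * fact (2*k) / (2^(2*k) * fact k))"
    using Suc by simp
  also have "\<dots> = sqrt pi * fact (2*Suc k) / (2^(2*Suc k) * fact (Suc k))"
  proof -
    have f1: "fact (2*Suc k) = (2*real k+2)*(2*real k+1) * (fact (2*k)::real)"
      by (simp add: algebra_simps)
    have f2: "fact (Suc k) = (real k + 1) * (fact k :: real)" by simp
    have f3: "(2::real)^(2*Suc k) = 4 * 2^(2*k)" by simp
    have "(fact k::real) > 0" "(2::real)^(2*k) > 0" "real k + 1 > 0" by auto
    then show ?thesis unfolding f1 f2 f3
      by (simp add: divide_simps) (simp add: algebra_simps)
  qed
  finally show ?case .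
qed


lemma ggamma_kernel_eq:
  assumes "n \<ge> 1"
  shows "ggamma_kernel (real n + 1) 2 y = indicator {0..} y *\<^sub>R (exp (-y\<^sup>2) * y^n)"
proof (cases "y > 0")
  case True
  then show ?thesis by (simp add: ggamma_kernel_def powr_realpow)
next
  case False
  then show ?thesis using assms by (cases "y = 0") (auto simp: ggamma_kernel_def)
qed

lemma Zc_value:
  assumes "n \<ge> 1"
  shows "(LINT y|lborel. ggamma_kernel (real n + 1) 2 y) = Gamma ((real n + 1) / 2) / 2"
proof -
  have eq: "ggamma_kernel (real n + 1) 2 = (\<lambda>y. indicator {0..} y *\<^sub>R (exp (-y\<^sup>2) * y^n))"
    using ggamma_kernel_eq[OF assms] by auto
  show ?thesis
  proof (cases "even n")
    case True
    then obtain k where k: "n = 2*k" by auto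
    have "Gamma ((real n + 1) / 2) = Gamma (real k + 1/2)" using k by (simp add: field_simps)
    also have "\<dots> = sqrt pi * fact (2*k) / (2^(2*k) * fact k)" by (rule Gamma_half_nat)
    finally have G: "Gamma ((real n + 1) / 2) = sqrt pi * fact (2*k) / (2^(2*k) * fact k)" .
    show ?thesis unfolding eq unfolding k
      using has_bochner_integral_integral_eq[OF gaussian_moment_even_pos[of k]] G k by simp
  next
    case False
    then obtain k where k: "n = 2*k+1" using oddE by blast
    have "(real n + 1) / 2 = real k + 1" using k by (simp add: field_simps)
    then have "Gamma ((real n + 1) / 2) = Gamma (real k + 1)" by (rule arg_cong)
    also have "\<dots> = fact k" using Gamma_fact[of k] by (simp add: add.commute)
    finally have G: "Gamma ((real n + 1) / 2) = fact k" .
    show ?thesis unfolding eq unfolding k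
      using has_bochner_integral_integral_eq[OF gaussian_moment_odd_pos[of k]] G k by simp
  qed
qed

lemma beta_kernel_meas[measurable]: "beta_kernel a b \<in> borel_measurable borel"
  unfolding beta_kernel_def by measurable

lemma ggamma_kernel_meas[measurable]: "ggamma_kernel a b \<in> borel_measurable borel"
  unfolding ggamma_kernel_def by measurable

lemma Bc_value:
  assumes "a > 0" "b > (0::real)"
  shows "(LINT y|lborel. beta_kernel a b y) = Beta a b"
proof -
  have "integral\<^sup>N lborel (\<lambda>x. ennreal (indicator {0..1} x * (x powr (a - 1) * (1 - x) powr (b - 1)))) = ennreal (Beta a b)"
    by (rule nn_integral_has_integral_lebesgue[OF _ has_integral_Beta_real[OF assms]]) auto
  moreover have "Beta a b \<ge> 0" using assms by (simp add: Beta_def)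
  ultimately show ?thesis
    by (subst integral_eq_nn_integral) (auto simp: beta_kernel_def mult.assoc)
qed


definition h2 :: "nat \<Rightarrow> nat \<Rightarrow> real \<Rightarrow> real \<Rightarrow> real \<Rightarrow> real" where
  "h2 n b s y q = indicator {0<..<s\<^sup>2} y * indicator {0<..} q *
     (y^(b-1) * (1 + q/s\<^sup>2)^n / (1 - y/s\<^sup>2)^(b+2) * exp (s\<^sup>2 - s\<^sup>2 * ((1 + q/s\<^sup>2)/(1 - y/s\<^sup>2))\<^sup>2))"

definition hlim :: "nat \<Rightarrow> real \<Rightarrow> real \<Rightarrow> real" where
  "hlim b y q = indicator {0<..} y * indicator {0<..} q * (y^(b-1) * exp (-2*y - 2*q))"

definition gdom :: "nat \<Rightarrow> nat \<Rightarrow> real \<Rightarrow> real \<Rightarrow> real" where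
  "gdom m b y q = fact m * exp 1 * (indicator {0<..} y * y^(b-1) * exp (-y)) * (indicator {0<..} q * exp (-q))"

lemma pow_le_fact_exp:
  assumes "(x::real) \<ge> 0"
  shows "x^m \<le> fact m * exp x"
proof -
  have "x^m / fact m \<le> (\<Sum>n\<le>m. x ^ n / fact n)"
    using assms by (intro member_le_sum) auto
  also have "\<dots> \<le> exp x"
    using assms summable_exp_generic[of x]
    by (auto simp: exp_def divide_inverse ac_simps intro!: sum_le_suminf)
  finally show ?thesis by (simp add: divide_simps mult.commute)
qed

lemma pow_gauss_bound:
  assumes "(w::real) \<ge> 1"
  shows "w^m * exp (-(w\<^sup>2 - 1)/2) \<le> fact m * exp 1"
proof -
  have "w^m * exp (-(w\<^sup>2 - 1)/2) \<le> fact m * exp w * exp (-(w\<^sup>2 - 1)/2)"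
    using pow_le_fact_exp[of w m] assms by (intro mult_right_mono) auto
  also have "\<dots> = fact m * exp (w - (w\<^sup>2 - 1)/2)"
  proof -
    have "exp (w - (w\<^sup>2 - 1)/2) = exp (w + (-(w\<^sup>2 - 1)/2))"
      by (rule arg_cong[where f=exp]) (simp add: field_simps)
    also have "\<dots> = exp w * exp (-(w\<^sup>2 - 1)/2)" by (rule exp_add)
    finally show ?thesis by simp
  qed
  also have "\<dots> \<le> fact m * exp 1"
  proof -
    have "0 \<le> (w-1)^2" by simp
    then have "0 \<le> w^2 - 2*w + 1" by (simp add: power2_diff)
    then have "w - (w\<^sup>2 - 1)/2 \<le> 1" by (simp add: field_simps)
    then show ?thesis by simp
  qed
  finally show ?thesis .
qed

lemma h2_nonneg: "h2 n b s y q \<ge> 0"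
proof (cases "y \<in> {0<..<s\<^sup>2} \<and> q > 0")
  case True
  then have "s\<^sup>2 > 0" by auto
  then have "1 - y/s\<^sup>2 > 0" using True by (simp add: field_simps)
  then show ?thesis using True unfolding h2_def by simp
qed (auto simp: h2_def indicator_def)

lemma h2_bound:
  assumes s: "s \<ge> 1"
  shows "\<bar>h2 n b s y q\<bar> \<le> gdom (n+b+2) b y q"
proof (cases "y \<in> {0<..<s\<^sup>2} \<and> q > 0")
  case False
  then show ?thesis unfolding h2_def gdom_def by (auto simp: indicator_def)
next
  case True
  define x where "x = 1 - y/s\<^sup>2"
  define u where "u = 1 + q/s\<^sup>2"
  define w where "w = u / x"
  have s2: "s\<^sup>2 \<ge> 1" using s by (simp add: one_le_power)
  have "s\<^sup>2 > 0" using s by simp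
  then have x: "0 < x" "x < 1" using True by (auto simp: x_def field_simps)
  have u: "u \<ge> 1" using True s2 by (auto simp: u_def)
  have w1: "w \<ge> u" unfolding w_def using x u by (simp add: field_simps)
  have w2: "w \<ge> 1/x" unfolding w_def using x u by (simp add: field_simps)
  have w3: "w \<ge> 1" using w1 u by simp
  have "h2 n b s y q = y^(b-1) * (u^n * (1/x)^(b+2)) * exp (s\<^sup>2 - s\<^sup>2 * w\<^sup>2)"
    using True unfolding h2_def x_def[symmetric] u_def[symmetric] w_def
    by (simp add: power_divide field_simps)
  also have "\<dots> \<le> y^(b-1) * w^(n+b+2) * exp (s\<^sup>2 - s\<^sup>2 * w\<^sup>2)"
  proof -
    have "u^n * (1/x)^(b+2) \<le> w^n * w^(b+2)"
      using u x w1 w2 by (intro mult_mono power_mono) auto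
    also have "\<dots> = w^(n+b+2)" by (simp add: power_add[symmetric] add_ac)
    finally have le: "u^n * (1/x)^(b+2) \<le> w^(n+b+2)" .
    show ?thesis using True le
      by (intro mult_right_mono mult_left_mono) (auto simp: power_add)
  qed
  also have "\<dots> = y^(b-1) * (w^(n+b+2) * exp (-(w\<^sup>2 - 1)/2)) * exp (-(s\<^sup>2 - 1/2) * (w\<^sup>2 - 1))"
  proof -
    have "exp (s\<^sup>2 - s\<^sup>2 * w\<^sup>2) = exp (-(w\<^sup>2 - 1)/2 + (-(s\<^sup>2 - 1/2) * (w\<^sup>2 - 1)))"
      by (rule arg_cong[where f=exp]) (simp add: field_simps)
    also have "\<dots> = exp (-(w\<^sup>2 - 1)/2) * exp (-(s\<^sup>2 - 1/2) * (w\<^sup>2 - 1))" by (rule exp_add)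
    finally have "exp (s\<^sup>2 - s\<^sup>2 * w\<^sup>2) = exp (-(w\<^sup>2 - 1)/2) * exp (-(s\<^sup>2 - 1/2) * (w\<^sup>2 - 1))" .
    then show ?thesis by (simp only: mult.assoc)
  qed
  also have "\<dots> \<le> y^(b-1) * (fact (n+b+2) * exp 1) * exp (-(y + q))"
  proof -
    have e1: "(s\<^sup>2 - 1/2) * (w\<^sup>2 - 1) \<ge> y + q"
    proof -
      have "w - 1 \<ge> u - x"
      proof -
        have "w - 1 - (u - x) = (1 - x) * (w - 1)" unfolding w_def using x by (simp add: field_simps)
        moreover have "(1 - x) * (w - 1) \<ge> 0" using x w3 by simp
        ultimately show ?thesis by linarith
      qed
      moreover have "u - x = (y + q)/s\<^sup>2" by (simp add: u_def x_def add_divide_distrib)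
      ultimately have "(y + q)/s\<^sup>2 \<le> w - 1" by simp
      then have "s\<^sup>2 * (w - 1) \<ge> y + q" using \<open>s\<^sup>2 > 0\<close> by (simp add: pos_divide_le_eq mult.commute)
      moreover have "w\<^sup>2 - 1 \<ge> 2 * (w - 1)"
      proof -
        have "0 \<le> (w-1)^2" by simp
        then have "0 \<le> w^2 - 2*w + 1" by (simp add: power2_diff)
        then show ?thesis by (smt (verit))
      qed
      moreover have "s\<^sup>2 - 1/2 \<ge> s\<^sup>2/2" using s2 by simp
      ultimately have H: "(s\<^sup>2 - 1/2) * (w\<^sup>2 - 1) \<ge> (s\<^sup>2/2) * (2*(w-1))"
        using w3 s2 by (intro mult_mono) auto
      have "(s\<^sup>2/2) * (2*(w-1)) = s\<^sup>2 * (w - 1)" by simp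
      then show ?thesis using H \<open>s\<^sup>2 * (w - 1) \<ge> y + q\<close> by linarith
    qed
    have A: "w^(n+b+2) * exp (-(w\<^sup>2 - 1)/2) \<le> fact (n+b+2) * exp 1"
      by (rule pow_gauss_bound[OF w3])
    have "-(s\<^sup>2 - 1/2) * (w\<^sup>2 - 1) \<le> -(y + q)" using e1 by (simp only: minus_mult_left[symmetric] neg_le_iff_le)
    then have B: "exp (-(s\<^sup>2 - 1/2) * (w\<^sup>2 - 1)) \<le> exp (-(y + q))" by (simp only: exp_le_cancel_iff)
    have C: "0 \<le> y^(b-1)" using True by simp
    show ?thesis
      by (rule mult_mono[OF mult_left_mono[OF A C] B]) (use True in auto)
  qed
  also have "\<dots> = gdom (n+b+2) b y q"
  proof -
    define K where "K = fact (n+b+2) * (exp 1::real)"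
    have e: "exp (-(y+q)) = exp (-y) * exp (-q)" by (simp add: exp_add[symmetric])
    show ?thesis using True unfolding gdom_def K_def[symmetric] e by (simp add: mult_ac)
  qed
  finally show ?thesis using h2_nonneg[of n b s y q] by simp
qed



lemma h2_lim: "((\<lambda>s. h2 n b s y q) \<longlongrightarrow> hlim b y q) at_top"
proof (cases "y > 0 \<and> q > 0")
  case False
  then have "\<And>s. h2 n b s y q = 0" "hlim b y q = 0" unfolding h2_def hlim_def by (auto simp: indicator_def)
  then show ?thesis by simp
next
  case True
  have ev: "eventually (\<lambda>s. y^(b-1) * (1 + q/s\<^sup>2)^n / (1 - y/s\<^sup>2)^(b+2) * exp (s\<^sup>2 - s\<^sup>2 * ((1 + q/s\<^sup>2)/(1 - y/s\<^sup>2))\<^sup>2) = h2 n b s y q) at_top"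
  proof -
    have "eventually (\<lambda>s::real. s\<^sup>2 > y) at_top" by real_asymp
    then show ?thesis by eventually_elim (use True in \<open>simp add: h2_def\<close>)
  qed
  have l1: "((\<lambda>s::real. 1 + q/s\<^sup>2) \<longlongrightarrow> 1) at_top" by real_asymp
  have l2: "((\<lambda>s::real. 1 - y/s\<^sup>2) \<longlongrightarrow> 1) at_top" by real_asymp
  have l3: "((\<lambda>s::real. s\<^sup>2 - s\<^sup>2 * ((1 + q/s\<^sup>2)/(1 - y/s\<^sup>2))\<^sup>2) \<longlongrightarrow> -2*y - 2*q) at_top"
    by real_asymp
  have "((\<lambda>s. y^(b-1) * (1 + q/s\<^sup>2)^n / (1 - y/s\<^sup>2)^(b+2) * exp (s\<^sup>2 - s\<^sup>2 * ((1 + q/s\<^sup>2)/(1 - y/s\<^sup>2))\<^sup>2))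
          \<longlongrightarrow> y^(b-1) * 1^n / 1^(b+2) * exp (-2*y - 2*q)) at_top"
    by (intro tendsto_intros l1 l2 l3) auto
  then have "((\<lambda>s. h2 n b s y q) \<longlongrightarrow> y^(b-1) * exp (-2*y - 2*q)) at_top"
    using ev by (simp add: tendsto_cong)
  then show ?thesis using True unfolding hlim_def by simp
qed

lemma pair_integral_prod:
  fixes f g :: "real \<Rightarrow> real"
  assumes [measurable]: "f \<in> borel_measurable borel" "g \<in> borel_measurable borel"
    and nn: "\<And>x. f x \<ge> 0" "\<And>x. g x \<ge> 0"
    and I: "(\<integral>\<^sup>+x. ennreal (f x) \<partial>lborel) = ennreal A" "(\<integral>\<^sup>+x. ennreal (g x) \<partial>lborel) = ennreal B"
    and AB: "A \<ge> 0" "B \<ge> 0"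
  shows "has_bochner_integral (lborel \<Otimes>\<^sub>M lborel) (\<lambda>p. f (fst p) * g (snd p)) (A * B)"
proof (rule has_bochner_integral_nn_integral)
  show "(\<lambda>p. f (fst p) * g (snd p)) \<in> borel_measurable (lborel \<Otimes>\<^sub>M lborel)" by measurable
  show "AE x in lborel \<Otimes>\<^sub>M lborel. 0 \<le> f (fst x) * g (snd x)" using nn by simp
  show "0 \<le> A * B" using AB by simp
  have "(\<integral>\<^sup>+p. ennreal (f (fst p) * g (snd p)) \<partial>(lborel \<Otimes>\<^sub>M lborel)) =
        (\<integral>\<^sup>+x. \<integral>\<^sup>+y. ennreal (f x * g y) \<partial>lborel \<partial>lborel)"
    by (subst lborel.nn_integral_fst[symmetric]) (simp_all)
  also have "\<dots> = (\<integral>\<^sup>+x. ennreal (f x) * (\<integral>\<^sup>+y. ennreal (g y) \<partial>lborel) \<partial>lborel)"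
    using nn by (simp add: ennreal_mult nn_integral_cmult)
  also have "\<dots> = ennreal A * ennreal B" using I by (simp add: nn_integral_multc)
  also have "\<dots> = ennreal (A * B)" using AB by (simp add: ennreal_mult)
  finally show "(\<integral>\<^sup>+p. ennreal (f (fst p) * g (snd p)) \<partial>(lborel \<Otimes>\<^sub>M lborel)) = ennreal (A * B)" .
qed

lemma erlang_like_integral:
  assumes l: "(l::real) > 0"
  shows "(\<integral>\<^sup>+x. ennreal (indicator {0<..} x * x^k * exp (-(l*x))) \<partial>lborel) = ennreal (fact k / l^(Suc k))"
proof -
  have "(\<integral>\<^sup>+x. ennreal (indicator {0<..} x * x^k * exp (-(l*x))) \<partial>lborel) =
        (\<integral>\<^sup>+x. ennreal (fact k / l^(Suc k)) * ennreal (erlang_density k l x * x^0) \<partial>lborel)"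
  proof (rule nn_integral_cong_AE)
    show "AE x in lborel. ennreal (indicator {0<..} x * x^k * exp (-(l*x))) =
                ennreal (fact k / l^(Suc k)) * ennreal (erlang_density k l x * x^0)"
      using AE_lborel_singleton[of 0]
    proof eventually_elim
      case (elim x)
      show ?case
      proof (cases "x > 0")
        case True
        then show ?thesis using l by (simp add: erlang_density_def ennreal_mult[symmetric] field_simps)
      next
        case False
        then show ?thesis using elim by (simp add: erlang_density_def)
      qed
    qed
  qed
  also have "\<dots> = ennreal (fact k / l^(Suc k)) * (\<integral>\<^sup>+x. ennreal (erlang_density k l x * x^0) \<partial>lborel)"
    by (rule nn_integral_cmult) simp
  also have "\<dots> = ennreal (fact k / l^(Suc k))"
    using nn_integral_erlang_ith_moment[OF l, of k 0] by simp
  finally show ?thesis .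
qed



lemma beta_density_meas[measurable]: "beta_density a b \<in> borel_measurable borel"
  unfolding beta_density_def by measurable

lemma ggamma_density_meas[measurable]: "ggamma_density a b \<in> borel_measurable borel"
  unfolding ggamma_density_def by measurable

lemma powr_nat_minus1: "(x::real) > 0 \<Longrightarrow> a \<ge> 1 \<Longrightarrow> x powr (real a - 1) = x^(a-1)"
  by (simp add: powr_realpow[symmetric] of_nat_diff)

lemma beta_kernel_out: "\<not> (0 < x \<and> x < 1) \<Longrightarrow> beta_kernel a b x = 0"
  by (cases "x = 0 \<or> x = 1") (auto simp: beta_kernel_def indicator_def)

lemma Phi_identity:
  fixes a b :: nat and s y q Bc Zc :: real
  assumes ab: "a \<ge> 1" "b \<ge> 1" and s: "s > 0" and y: "0 < y" "y < s\<^sup>2" and q: "q > 0"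
  defines "x \<equiv> 1 - y/s\<^sup>2"
  shows "beta_kernel (real a) (real b) x / Bc * (ggamma_kernel (real a + real b + 1) 2 (s/x + q/(s*x)) / Zc) / (s*x) / s\<^sup>2
     = s^(a+b)/s^(2*b+1)*exp(-s\<^sup>2)/(Bc*Zc) * (y^(b-1)*(1+q/s\<^sup>2)^(a+b)/x^(b+2) * exp(s\<^sup>2 - s\<^sup>2*((1+q/s\<^sup>2)/x)\<^sup>2))"
proof -
  define u where "u = 1 + q/s\<^sup>2"
  have s2: "s\<^sup>2 > 0" using s by simp
  have x: "0 < x" "x < 1" using y s2 by (auto simp: x_def field_simps)
  have u: "u > 0" using q s2 unfolding u_def by (simp add: add_pos_pos)
  have z: "s/x + q/(s*x) = s*u/x" using s x unfolding u_def by (simp add: field_simps power2_eq_square)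
  have zpos: "s*u/x > 0" using s u x by simp
  have omx: "1 - x = y/s\<^sup>2" by (simp add: x_def)
  have bk: "beta_kernel (real a) (real b) x = x^(a-1) * (y/s\<^sup>2)^(b-1)"
    using x ab y s2 by (simp add: beta_kernel_def omx powr_nat_minus1)
  have gk: "ggamma_kernel (real a + real b + 1) 2 (s*u/x) = (s*u/x)^(a+b) * exp (-(s\<^sup>2 * (u/x)\<^sup>2))"
  proof -
    have "(s*u/x) powr (real a + real b) = (s*u/x)^(a+b)" by (metis of_nat_add powr_realpow zpos)
    then show ?thesis using zpos by (simp add: ggamma_kernel_def power_mult_distrib power_divide)
  qed
  have e: "exp (-(s\<^sup>2 * (u/x)\<^sup>2)) = exp (-s\<^sup>2) * exp (s\<^sup>2 - s\<^sup>2 * (u/x)\<^sup>2)"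
    by (simp add: exp_add[symmetric])
  obtain a' where a': "a = Suc a'" using ab by (cases a) auto
  obtain b' where b': "b = Suc b'" using ab by (cases b) auto
  have sb: "s^(b'*2) = s^b' * s^b'" by (simp add: mult_2_right power_add mult.commute)
  show ?thesis
    unfolding z gk bk e u_def[symmetric] using x s
    by (simp add: a' b' sb power_divide power_mult_distrib field_simps power2_eq_square power_add)
qed



lemma inner_subst:
  fixes fZ :: "real \<Rightarrow> real"
  assumes [measurable]: "fZ \<in> borel_measurable borel" and nn: "\<And>z. fZ z \<ge> 0"
    and t: "t > 0" and s: "s = t/2" and x: "0 < x"
  shows "(\<integral>\<^sup>+z. ennreal (fZ z) * indicator {p. t < 2 * fst p * snd p} (x, z) \<partial>lborel)
       = (\<integral>\<^sup>+q. ennreal (indicator {0<..} q * fZ (s/x + q/(s*x)) / (s*x)) \<partial>lborel)"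
proof -
  have sp: "s > 0" using t s by simp
  have c: "1/(s*x) \<noteq> 0" using sp x by simp
  have meas: "(\<lambda>z. ennreal (fZ z) * indicator {p. t < 2 * fst p * snd p} (x, z)) \<in> borel_measurable borel"
    by measurable
  have "(\<integral>\<^sup>+z. ennreal (fZ z) * indicator {p. t < 2 * fst p * snd p} (x, z) \<partial>lborel)
       = ennreal \<bar>1/(s*x)\<bar> * (\<integral>\<^sup>+q. ennreal (fZ (s/x + 1/(s*x) * q)) * indicator {p. t < 2 * fst p * snd p} (x, s/x + 1/(s*x) * q) \<partial>lborel)"
    by (rule nn_integral_real_affine[OF meas c])
  also have "\<dots> = (\<integral>\<^sup>+q. ennreal \<bar>1/(s*x)\<bar> * (ennreal (fZ (s/x + 1/(s*x) * q)) * indicator {p. t < 2 * fst p * snd p} (x, s/x + 1/(s*x) * q)) \<partial>lborel)"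
    by (rule nn_integral_cmult[symmetric]) measurable
  also have "\<dots> = (\<integral>\<^sup>+q. ennreal (indicator {0<..} q * fZ (s/x + q/(s*x)) / (s*x)) \<partial>lborel)"
  proof (rule nn_integral_cong)
    fix q :: real
    have iff: "t < 2 * x * (s/x + 1/(s*x) * q) \<longleftrightarrow> 0 < q"
    proof -
      have eq: "2 * x * (s/x + 1/(s*x) * q) = t + 2*q/s" using x sp s by (simp add: field_simps)
      show ?thesis unfolding eq using sp by (simp add: zero_less_divide_iff)
    qed
    show "ennreal \<bar>1/(s*x)\<bar> * (ennreal (fZ (s/x + 1/(s*x) * q)) * indicator {p. t < 2 * fst p * snd p} (x, s/x + 1/(s*x) * q))
        = ennreal (indicator {0<..} q * fZ (s/x + q/(s*x)) / (s*x))"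
      using iff sp x nn[of "s/x + q/(s*x)"]
      by (auto simp: indicator_def ennreal_mult[symmetric] divide_inverse mult.commute)
  qed
  finally show ?thesis .
qed



lemma h2_meas_pair[measurable]: "(\<lambda>p. h2 n b s (fst p) (snd p)) \<in> borel_measurable (lborel \<Otimes>\<^sub>M lborel)"
  unfolding h2_def by measurable

lemma h2_meas[measurable (raw)]:
  assumes [measurable]: "f \<in> borel_measurable M" "g \<in> borel_measurable M"
  shows "(\<lambda>x. h2 n b s (f x) (g x)) \<in> borel_measurable M"
  unfolding h2_def by measurable

lemma beta_kernel_nonneg: "beta_kernel a b x \<ge> 0"
  unfolding beta_kernel_def by (auto simp: indicator_def)

lemma ggamma_kernel_nonneg: "ggamma_kernel a b x \<ge> 0"
  unfolding ggamma_kernel_def by (auto simp: indicator_def)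

lemma chain:
  fixes a b :: nat and t s Bc Zc :: real
  assumes ab: "a \<ge> 1" "b \<ge> 1" and t: "t > 0" and s: "s = t/2"
    and Bc: "Bc = (LINT y|lborel. beta_kernel (real a) (real b) y)" "Bc > 0"
    and Zc: "Zc = (LINT y|lborel. ggamma_kernel (real a + real b + 1) 2 y)" "Zc > 0"
  shows "(\<integral>\<^sup>+x. \<integral>\<^sup>+z. ennreal (beta_density (real a) (real b) x) * ennreal (ggamma_density (real a + real b + 1) 2 z)
              * indicator {p. t < 2 * fst p * snd p} (x, z) \<partial>lborel \<partial>lborel)
    = ennreal (s^(a+b)/s^(2*b+1)*exp(-s\<^sup>2)/(Bc*Zc)) * (\<integral>\<^sup>+p. ennreal (h2 (a+b) b s (fst p) (snd p)) \<partial>(lborel \<Otimes>\<^sub>M lborel))"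
proof -
  define fB where "fB = beta_density (real a) (real b)"
  define fZ where "fZ = ggamma_density (real a + real b + 1) 2"
  have fB_eq: "fB x = beta_kernel (real a) (real b) x / Bc" for x
    unfolding fB_def beta_density_def Bc(1) ..
  have fZ_eq: "fZ x = ggamma_kernel (real a + real b + 1) 2 x / Zc" for x
    unfolding fZ_def ggamma_density_def Zc(1) ..
  have [measurable]: "fB \<in> borel_measurable borel" "fZ \<in> borel_measurable borel"
    unfolding fB_def fZ_def by measurable
  have fBnn: "fB x \<ge> 0" for x unfolding fB_eq using Bc(2) beta_kernel_nonneg by simp
  have fZnn: "fZ x \<ge> 0" for x unfolding fZ_eq using Zc(2) ggamma_kernel_nonneg by simp
  have sp: "s > 0" using t s by simp
  define Phi where "Phi x q = fB x * (indicator {0<..} q * fZ (s/x + q/(s*x)) / (s*x)) * indicator {0<..<1} x" for x q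
  have Phi_meas[measurable (raw)]: "(\<lambda>x. Phi (f x) (g x)) \<in> borel_measurable M"
    if [measurable]: "f \<in> borel_measurable M" "g \<in> borel_measurable M" for f g and M :: "'z measure"
    unfolding Phi_def by measurable
  have step1: "(\<integral>\<^sup>+x. \<integral>\<^sup>+z. ennreal (fB x) * ennreal (fZ z) * indicator {p. t < 2 * fst p * snd p} (x, z) \<partial>lborel \<partial>lborel)
      = (\<integral>\<^sup>+x. \<integral>\<^sup>+q. ennreal (Phi x q) \<partial>lborel \<partial>lborel)"
  proof (rule nn_integral_cong)
    fix x :: real
    have "(\<integral>\<^sup>+z. ennreal (fB x) * ennreal (fZ z) * indicator {p. t < 2 * fst p * snd p} (x, z) \<partial>lborel)
        = ennreal (fB x) * (\<integral>\<^sup>+z. ennreal (fZ z) * indicator {p. t < 2 * fst p * snd p} (x, z) \<partial>lborel)"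
      by (subst nn_integral_cmult[symmetric]) (measurable, simp add: mult.assoc)
    also have "\<dots> = (\<integral>\<^sup>+q. ennreal (Phi x q) \<partial>lborel)"
    proof (cases "0 < x \<and> x < 1")
      case True
      have "ennreal (fB x) * (\<integral>\<^sup>+z. ennreal (fZ z) * indicator {p. t < 2 * fst p * snd p} (x, z) \<partial>lborel)
          = ennreal (fB x) * (\<integral>\<^sup>+q. ennreal (indicator {0<..} q * fZ (s/x + q/(s*x)) / (s*x)) \<partial>lborel)"
      proof -
        have I: "(\<integral>\<^sup>+z. ennreal (fZ z) * indicator {p. t < 2 * fst p * snd p} (x, z) \<partial>lborel)
          = (\<integral>\<^sup>+q. ennreal (indicator {0<..} q * fZ (s/x + q/(s*x)) / (s*x)) \<partial>lborel)"
          by (rule inner_subst[OF _ fZnn t s]) (use True in auto)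
        then show ?thesis by (rule arg_cong)
      qed
      also have "\<dots> = (\<integral>\<^sup>+q. ennreal (fB x) * ennreal (indicator {0<..} q * fZ (s/x + q/(s*x)) / (s*x)) \<partial>lborel)"
        by (rule nn_integral_cmult[symmetric]) measurable
      also have "\<dots> = (\<integral>\<^sup>+q. ennreal (Phi x q) \<partial>lborel)"
      proof (intro nn_integral_cong)
        fix q
        have "indicator {0<..} q * fZ (s/x + q/(s*x)) / (s*x) \<ge> 0"
          using fZnn sp True by (simp add: indicator_def)
        then show "ennreal (fB x) * ennreal (indicator {0<..} q * fZ (s/x + q/(s*x)) / (s*x)) = ennreal (Phi x q)"
          using True fBnn[of x] by (simp add: Phi_def ennreal_mult[symmetric])
      qed
      finally show ?thesis .
    next
      case False
      then have "fB x = 0" unfolding fB_eq by (simp add: beta_kernel_out)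
      then show ?thesis by (simp add: Phi_def)
    qed
    finally show "(\<integral>\<^sup>+z. ennreal (fB x) * ennreal (fZ z) * indicator {p. t < 2 * fst p * snd p} (x, z) \<partial>lborel)
        = (\<integral>\<^sup>+q. ennreal (Phi x q) \<partial>lborel)" .
  qed
  have c: "-1/s\<^sup>2 \<noteq> 0" using sp by simp
  have step2: "(\<integral>\<^sup>+x. \<integral>\<^sup>+q. ennreal (Phi x q) \<partial>lborel \<partial>lborel)
      = ennreal \<bar>-1/s\<^sup>2\<bar> * (\<integral>\<^sup>+y. \<integral>\<^sup>+q. ennreal (Phi (1 + (-1/s\<^sup>2) * y) q) \<partial>lborel \<partial>lborel)"
    by (rule nn_integral_real_affine[OF _ c]) measurable
  also have "\<dots> = (\<integral>\<^sup>+y. ennreal (1/s\<^sup>2) * (\<integral>\<^sup>+q. ennreal (Phi (1 + (-1/s\<^sup>2) * y) q) \<partial>lborel) \<partial>lborel)"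
  proof -
    have e: "ennreal \<bar>-1/s\<^sup>2\<bar> = ennreal (1/s\<^sup>2)" by simp
    show ?thesis unfolding e by (rule nn_integral_cmult[symmetric]) measurable
  qed
  also have "\<dots> = (\<integral>\<^sup>+y. \<integral>\<^sup>+q. ennreal (1/s\<^sup>2) * ennreal (Phi (1 + (-1/s\<^sup>2) * y) q) \<partial>lborel \<partial>lborel)"
    by (intro nn_integral_cong nn_integral_cmult[symmetric]) measurable
  also have "\<dots> = (\<integral>\<^sup>+y. \<integral>\<^sup>+q. ennreal (s^(a+b)/s^(2*b+1)*exp(-s\<^sup>2)/(Bc*Zc)) * ennreal (h2 (a+b) b s y q) \<partial>lborel \<partial>lborel)"
  proof (intro nn_integral_cong)
    fix y q :: real
    show "ennreal (1/s\<^sup>2) * ennreal (Phi (1 + (-1/s\<^sup>2) * y) q) = ennreal (s^(a+b)/s^(2*b+1)*exp(-s\<^sup>2)/(Bc*Zc)) * ennreal (h2 (a+b) b s y q)"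
    proof (cases "0 < y \<and> y < s\<^sup>2 \<and> q > 0")
      case True
      have id: "Phi (1 + (-1/s\<^sup>2) * y) q / s\<^sup>2 = s^(a+b)/s^(2*b+1)*exp(-s\<^sup>2)/(Bc*Zc) * h2 (a+b) b s y q"
      proof -
        have x: "0 < 1 - y/s\<^sup>2" "1 - y/s\<^sup>2 < 1" using True sp by (auto simp: field_simps)
        show ?thesis
          using Phi_identity[OF ab sp, of y q Bc Zc] True x
          by (simp add: Phi_def h2_def fB_eq fZ_eq)
      qed
      have nn1: "Phi (1 + (-1/s\<^sup>2) * y) q \<ge> 0" unfolding Phi_def using fBnn fZnn sp True
        by (auto simp: indicator_def field_simps)
      have nn2: "h2 (a+b) b s y q \<ge> 0" by (rule h2_nonneg)
      have nn3: "s^(a+b)/s^(2*b+1)*exp(-s\<^sup>2)/(Bc*Zc) \<ge> 0" using sp Bc Zc by simp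
      show ?thesis using id nn1 nn2 nn3 sp
        by (simp add: ennreal_mult[symmetric] divide_inverse mult.commute)
    next
      case False
      then have "Phi (1 + (-1/s\<^sup>2) * y) q = 0" "h2 (a+b) b s y q = 0"
        using sp by (auto simp: Phi_def h2_def indicator_def field_simps)
      then show ?thesis by simp
    qed
  qed
  also have "\<dots> = ennreal (s^(a+b)/s^(2*b+1)*exp(-s\<^sup>2)/(Bc*Zc)) * (\<integral>\<^sup>+y. \<integral>\<^sup>+q. ennreal (h2 (a+b) b s y q) \<partial>lborel \<partial>lborel)"
    by (subst nn_integral_cmult[symmetric], measurable, intro nn_integral_cong nn_integral_cmult) measurable
  also have "(\<integral>\<^sup>+y. \<integral>\<^sup>+q. ennreal (h2 (a+b) b s y q) \<partial>lborel \<partial>lborel) = (\<integral>\<^sup>+p. ennreal (h2 (a+b) b s (fst p) (snd p)) \<partial>(lborel \<Otimes>\<^sub>M lborel))"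
  proof -
    have m: "(\<lambda>p. ennreal (h2 (a+b) b s (fst p) (snd p))) \<in> borel_measurable (lborel \<Otimes>\<^sub>M lborel)"
      by measurable
    show ?thesis using lborel.nn_integral_fst[OF m] by simp
  qed
  finally have step2': "(\<integral>\<^sup>+x. \<integral>\<^sup>+q. ennreal (Phi x q) \<partial>lborel \<partial>lborel) =
      ennreal (s^(a+b)/s^(2*b+1)*exp(-s\<^sup>2)/(Bc*Zc)) * (\<integral>\<^sup>+p. ennreal (h2 (a+b) b s (fst p) (snd p)) \<partial>(lborel \<Otimes>\<^sub>M lborel))" .
  show ?thesis using step1 step2' unfolding fB_def fZ_def by simp
qed



lemma gdom_integrable: "integrable (lborel \<Otimes>\<^sub>M lborel) (\<lambda>p. gdom m b (fst p) (snd p))"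
proof -
  define f1 where "f1 y = indicator {0<..} y * y^(b-1) * exp (-(1*y))" for y :: real
  define f2 where "f2 q = indicator {0<..} q * q^0 * exp (-(1*q))" for q :: real
  have [measurable]: "f1 \<in> borel_measurable borel" "f2 \<in> borel_measurable borel"
    unfolding f1_def f2_def by measurable
  have I1: "(\<integral>\<^sup>+x. ennreal (f1 x) \<partial>lborel) = ennreal (fact (b-1) / 1^(Suc (b-1)))"
    unfolding f1_def by (rule erlang_like_integral) simp
  have I2: "(\<integral>\<^sup>+x. ennreal (f2 x) \<partial>lborel) = ennreal (fact 0 / 1^(Suc 0))"
    unfolding f2_def by (rule erlang_like_integral) simp
  have "has_bochner_integral (lborel \<Otimes>\<^sub>M lborel) (\<lambda>p. f1 (fst p) * f2 (snd p)) (fact (b-1) / 1^(Suc (b-1)) * (fact 0 / 1^(Suc 0)))"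
    by (rule pair_integral_prod[OF _ _ _ _ I1 I2]) (auto simp: f1_def f2_def indicator_def)
  then have int: "integrable (lborel \<Otimes>\<^sub>M lborel) (\<lambda>p. f1 (fst p) * f2 (snd p))"
    by (rule integrable.intros)
  have "integrable (lborel \<Otimes>\<^sub>M lborel) (\<lambda>p. (fact m * exp 1) * (f1 (fst p) * f2 (snd p)))"
    using int by simp
  moreover have "(\<lambda>p. (fact m * exp 1) * (f1 (fst p) * f2 (snd p))) = (\<lambda>p. gdom m b (fst p) (snd p))"
    by (auto simp: f1_def f2_def gdom_def)
  ultimately show ?thesis by simp
qed

lemma gdom_meas[measurable]: "(\<lambda>p. gdom m b (fst p) (snd p)) \<in> borel_measurable (lborel \<Otimes>\<^sub>M lborel)"
  unfolding gdom_def by measurable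

lemma hlim_meas[measurable]: "(\<lambda>p. hlim b (fst p) (snd p)) \<in> borel_measurable (lborel \<Otimes>\<^sub>M lborel)"
  unfolding hlim_def by measurable

lemma h2_integrable:
  assumes "s \<ge> 1"
  shows "integrable (lborel \<Otimes>\<^sub>M lborel) (\<lambda>p. h2 n b s (fst p) (snd p))"
proof (rule Bochner_Integration.integrable_bound[OF gdom_integrable[of "n+b+2" b]])
  show "(\<lambda>p. h2 n b s (fst p) (snd p)) \<in> borel_measurable (lborel \<Otimes>\<^sub>M lborel)" by measurable
  show "AE x in lborel \<Otimes>\<^sub>M lborel. norm (h2 n b s (fst x) (snd x)) \<le> norm (gdom (n+b+2) b (fst x) (snd x))"
  proof (rule AE_I2)
    fix x :: "real \<times> real"
    have "\<bar>h2 n b s (fst x) (snd x)\<bar> \<le> gdom (n+b+2) b (fst x) (snd x)" by (rule h2_bound[OF assms])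
    then show "norm (h2 n b s (fst x) (snd x)) \<le> norm (gdom (n+b+2) b (fst x) (snd x))"
      by (metis abs_ge_self order_trans real_norm_def)
  qed
qed

lemma hlim_integral:
  "has_bochner_integral (lborel \<Otimes>\<^sub>M lborel) (\<lambda>p. hlim b (fst p) (snd p)) (fact (b-1) / 2^(Suc (b-1)) / 2)"
proof -
  define f1 where "f1 y = indicator {0<..} y * y^(b-1) * exp (-(2*y))" for y :: real
  define f2 where "f2 q = indicator {0<..} q * q^0 * exp (-(2*q))" for q :: real
  have [measurable]: "f1 \<in> borel_measurable borel" "f2 \<in> borel_measurable borel"
    unfolding f1_def f2_def by measurable
  have I1: "(\<integral>\<^sup>+x. ennreal (f1 x) \<partial>lborel) = ennreal (fact (b-1) / 2^(Suc (b-1)))"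
    unfolding f1_def by (rule erlang_like_integral) simp
  have I2: "(\<integral>\<^sup>+x. ennreal (f2 x) \<partial>lborel) = ennreal (fact 0 / 2^(Suc 0))"
    unfolding f2_def by (rule erlang_like_integral) simp
  have "has_bochner_integral (lborel \<Otimes>\<^sub>M lborel) (\<lambda>p. f1 (fst p) * f2 (snd p)) (fact (b-1) / 2^(Suc (b-1)) * (fact 0 / 2^(Suc 0)))"
    by (rule pair_integral_prod[OF _ _ _ _ I1 I2]) (auto simp: f1_def f2_def indicator_def)
  moreover have "(\<lambda>p. f1 (fst p) * f2 (snd p)) = (\<lambda>p. hlim b (fst p) (snd p))"
  proof -
    have e: "exp (-2*y - 2*q) = exp (-(2*y)) * exp (-(2*q))" for y q :: real
      by (subst exp_add[symmetric]) simp
    show ?thesis unfolding hlim_def e by (auto simp: f1_def f2_def indicator_def)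
  qed
  moreover have "fact (b-1) / 2^(Suc (b-1)) * (fact 0 / 2^(Suc 0)) = (fact (b-1) / 2^(Suc (b-1)) / 2 :: real)" by simp
  ultimately show ?thesis by simp
qed

lemma J_lim:
  "((\<lambda>s. integral\<^sup>L (lborel \<Otimes>\<^sub>M lborel) (\<lambda>p. h2 n b s (fst p) (snd p))) \<longlongrightarrow> fact (b-1) / 2^(Suc (b-1)) / 2) at_top"
proof -
  have "((\<lambda>s. integral\<^sup>L (lborel \<Otimes>\<^sub>M lborel) (\<lambda>p. h2 n b s (fst p) (snd p))) \<longlongrightarrow>
          integral\<^sup>L (lborel \<Otimes>\<^sub>M lborel) (\<lambda>p. hlim b (fst p) (snd p))) at_top"
  proof (rule integral_dominated_convergence_at_top[where w = "\<lambda>p. gdom (n+b+2) b (fst p) (snd p)"])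
    show "(\<lambda>p. hlim b (fst p) (snd p)) \<in> borel_measurable (lborel \<Otimes>\<^sub>M lborel)" by measurable
    show "(\<lambda>p. h2 n b s (fst p) (snd p)) \<in> borel_measurable (lborel \<Otimes>\<^sub>M lborel)" for s by measurable
    show "integrable (lborel \<Otimes>\<^sub>M lborel) (\<lambda>p. gdom (n+b+2) b (fst p) (snd p))" by (rule gdom_integrable)
    show "AE x in lborel \<Otimes>\<^sub>M lborel. ((\<lambda>i. h2 n b i (fst x) (snd x)) \<longlongrightarrow> hlim b (fst x) (snd x)) at_top"
      by (simp add: h2_lim)
    show "\<forall>\<^sub>F i in at_top. AE x in lborel \<Otimes>\<^sub>M lborel. norm (h2 n b i (fst x) (snd x)) \<le> gdom (n+b+2) b (fst x) (snd x)"
      using eventually_ge_at_top[of "1::real"]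
      by eventually_elim (intro AE_I2, unfold real_norm_def, rule h2_bound, assumption)
  qed
  then show ?thesis using has_bochner_integral_integral_eq[OF hlim_integral[of b]] by simp
qed



theorem lemma2:
  fixes M :: "'w measure" and B Z :: "'w \<Rightarrow> real" and a b :: nat
  assumes "prob_space M"
    and "a > 0" and "b > 0"
    and "distributed M lborel B (\<lambda>x. ennreal (beta_density (real a) (real b) x))"
    and "distributed M lborel Z (\<lambda>x. ennreal (ggamma_density (real a + real b + 1) 2 x))"
    and "prob_space.indep_var M borel B borel Z"
  shows "(\<lambda>t. measure M {\<omega> \<in> space M. 2 * B \<omega> * Z \<omega> > t})
           \<sim>[at_top] (\<lambda>t. c_const ((real a + real b + 2) / 2) (real a)
                         * t powr (-1 + real a - real b) * exp (- (t\<^sup>2) / 4))"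
proof -
  interpret P: prob_space M by fact
  note distB = assms(4) and distZ = assms(5) and ind = assms(6)
  have ab: "a \<ge> 1" "b \<ge> 1" using assms(2,3) by auto
  define Bc where "Bc = (LINT y|lborel. beta_kernel (real a) (real b) y)"
  define Zc where "Zc = (LINT y|lborel. ggamma_kernel (real a + real b + 1) 2 y)"
  have Bc_val: "Bc = Beta (real a) (real b)" unfolding Bc_def using assms(2,3) by (intro Bc_value) auto
  have Zc_val: "Zc = Gamma ((real a + real b + 1) / 2) / 2"
    unfolding Zc_def using Zc_value[of "a+b"] ab by simp
  have Bc_pos: "Bc > 0" unfolding Bc_val Beta_def using assms(2,3) by simp
  have Zc_pos: "Zc > 0" unfolding Zc_val by simp
  define pref where "pref s = s^(a+b)/s^(2*b+1)*exp(-s\<^sup>2)/(Bc*Zc)" for s :: real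
  define J where "J s = integral\<^sup>L (lborel \<Otimes>\<^sub>M lborel) (\<lambda>p. h2 (a+b) b s (fst p) (snd p))" for s
  have joint: "distributed M (lborel \<Otimes>\<^sub>M lborel) (\<lambda>x. (B x, Z x))
      (\<lambda>(x, y). ennreal (beta_density (real a) (real b) x) * ennreal (ggamma_density (real a + real b + 1) 2 y))"
  proof (rule P.distributed_joint_indep'[OF lborel.sigma_finite_measure_axioms lborel.sigma_finite_measure_axioms distB distZ])
    have "distr M borel B \<Otimes>\<^sub>M distr M borel Z = distr M (borel \<Otimes>\<^sub>M borel) (\<lambda>x. (B x, Z x))"
      using ind P.indep_var_distribution_eq by blast
    moreover have "distr M lborel B = distr M borel B" "distr M lborel Z = distr M borel Z"
      by (rule distr_cong; simp)+
    moreover have "distr M (lborel \<Otimes>\<^sub>M lborel) (\<lambda>x. (B x, Z x)) = distr M (borel \<Otimes>\<^sub>M borel) (\<lambda>x. (B x, Z x))"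
      by (rule distr_cong) (simp_all cong: sets_pair_measure_cong)
    ultimately show "distr M lborel B \<Otimes>\<^sub>M distr M lborel Z = distr M (lborel \<Otimes>\<^sub>M lborel) (\<lambda>x. (B x, Z x))"
      by simp
  qed
  have formula: "measure M {\<omega> \<in> space M. 2 * B \<omega> * Z \<omega> > t} = pref (t/2) * J (t/2)" if t: "t \<ge> 2" for t
  proof -
    define S where "S = {p::real\<times>real. t < 2 * fst p * snd p}"
    have S_sets: "S \<in> sets (lborel \<Otimes>\<^sub>M lborel)"
    proof -
      have "S = {p \<in> space (lborel \<Otimes>\<^sub>M lborel). t < 2 * fst p * snd p}"
        by (simp add: S_def space_pair_measure)
      also have "\<dots> \<in> sets (lborel \<Otimes>\<^sub>M lborel)" by measurable
      finally show ?thesis .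
    qed
    have set_eq: "{\<omega> \<in> space M. 2 * B \<omega> * Z \<omega> > t} = (\<lambda>x. (B x, Z x)) -` S \<inter> space M"
      by (auto simp: S_def)
    have "emeasure M {\<omega> \<in> space M. 2 * B \<omega> * Z \<omega> > t}
        = (\<integral>\<^sup>+p. (\<lambda>(x, y). ennreal (beta_density (real a) (real b) x) * ennreal (ggamma_density (real a + real b + 1) 2 y)) p
              * indicator S p \<partial>(lborel \<Otimes>\<^sub>M lborel))"
      unfolding set_eq by (rule distributed_emeasure[OF joint S_sets])
    also have "\<dots> = (\<integral>\<^sup>+x. \<integral>\<^sup>+z. ennreal (beta_density (real a) (real b) x) * ennreal (ggamma_density (real a + real b + 1) 2 z)
              * indicator {p. t < 2 * fst p * snd p} (x, z) \<partial>lborel \<partial>lborel)"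
    proof -
      have m: "(\<lambda>p. (\<lambda>(x, y). ennreal (beta_density (real a) (real b) x) * ennreal (ggamma_density (real a + real b + 1) 2 y)) p
              * indicator S p) \<in> borel_measurable (lborel \<Otimes>\<^sub>M lborel)"
        using S_sets by measurable
      show ?thesis using lborel.nn_integral_fst[OF m] by (simp add: S_def)
    qed
    also have "\<dots> = ennreal (pref (t/2)) * (\<integral>\<^sup>+p. ennreal (h2 (a+b) b (t/2) (fst p) (snd p)) \<partial>(lborel \<Otimes>\<^sub>M lborel))"
      unfolding pref_def using t by (intro chain[OF ab _ refl Bc_def Bc_pos Zc_def Zc_pos]) auto
    also have "(\<integral>\<^sup>+p. ennreal (h2 (a+b) b (t/2) (fst p) (snd p)) \<partial>(lborel \<Otimes>\<^sub>M lborel)) = ennreal (J (t/2))"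
      unfolding J_def using t by (intro nn_integral_eq_integral h2_integrable) (auto simp: h2_nonneg)
    also have "ennreal (pref (t/2)) * ennreal (J (t/2)) = ennreal (pref (t/2) * J (t/2))"
    proof -
      have "pref (t/2) \<ge> 0" using t Bc_pos Zc_pos by (simp add: pref_def)
      moreover have "J (t/2) \<ge> 0" unfolding J_def by (intro integral_nonneg_AE) (simp add: h2_nonneg)
      ultimately show ?thesis by (simp add: ennreal_mult)
    qed
    finally have "emeasure M {\<omega> \<in> space M. 2 * B \<omega> * Z \<omega> > t} = ennreal (pref (t/2) * J (t/2))" .
    moreover have "pref (t/2) * J (t/2) \<ge> 0"
    proof -
      have "pref (t/2) \<ge> 0" using t Bc_pos Zc_pos by (simp add: pref_def)
      moreover have "J (t/2) \<ge> 0" unfolding J_def by (intro integral_nonneg_AE) (simp add: h2_nonneg)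
      ultimately show ?thesis by simp
    qed
    ultimately show ?thesis by (simp add: measure_def)
  qed
  define cc where "cc = c_const ((real a + real b + 2) / 2) (real a)"
  define e where "e = -1 + real a - real b"
  define g where "g t = cc * t powr e * exp (- (t\<^sup>2) / 4)" for t :: real
  define L where "L = fact (b-1) / 2^(Suc (b-1)) / (2::real)"
  define R where "R = 1 / (Bc * Zc * cc * 2 powr e)"
  have cc_val: "cc = Gamma (real a + real b) / (2 powr (real a - 1) * Gamma ((real a + real b + 1) / 2) * Gamma (real a))"
  proof -
    have e1: "2 * ((real a + real b + 2) / 2) - 2 = real a + real b" by (simp add: field_simps)
    have e2: "(real a + real b + 2) / 2 - 1/2 = (real a + real b + 1) / 2" by (simp add: field_simps)
    show ?thesis unfolding cc_def c_const_def e1 e2 ..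
  qed
  have cc_pos: "cc > 0" unfolding cc_val using ab by simp
  have ratio: "pref (t/2) / g t = R" if t: "t > 0" for t
  proof -
    define s where "s = t/2"
    have sp: "s > 0" using t by (simp add: s_def)
    have ts: "t = 2 * s" by (simp add: s_def)
    have p1: "s^(a+b)/s^(2*b+1) = s powr e"
    proof -
      have "s^(a+b)/s^(2*b+1) = s powr (real (a+b)) / s powr (real (2*b+1))"
        by (simp only: powr_realpow[OF sp])
      also have "\<dots> = s powr (real (a+b) - real (2*b+1))" by (rule powr_diff[symmetric])
      also have "real (a+b) - real (2*b+1) = e" by (simp add: e_def)
      finally show ?thesis .
    qed
    have p2: "t powr e = 2 powr e * s powr e" unfolding ts using sp by (simp add: powr_mult)
    have p3: "exp (- (t\<^sup>2) / 4) = exp (-s\<^sup>2)" unfolding ts by (simp add: power_mult_distrib)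
    have "pref s / g t = (s powr e * exp(-s\<^sup>2)/(Bc*Zc)) / (cc * (2 powr e * s powr e) * exp (-s\<^sup>2))"
      unfolding pref_def g_def p1 p2 p3 ..
    also have "\<dots> = R" unfolding R_def using sp Bc_pos Zc_pos cc_pos by (simp add: field_simps)
    finally show ?thesis by (simp add: s_def)
  qed
  have LR: "L * R = 1"
  proof -
    have G: "Gamma (real b) = fact (b-1)" using Gamma_fact[of "b-1"] ab by (simp add: of_nat_diff)
    have pw: "2 powr e / 2 powr (real a - 1) = 1 / 2^b"
    proof -
      have "2 powr e / 2 powr (real a - 1) = 2 powr (e - (real a - 1))" by (simp add: powr_diff)
      also have "e - (real a - 1) = - real b" by (simp add: e_def)
      finally show ?thesis by (simp add: powr_minus powr_realpow divide_inverse)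
    qed
    have "Bc * Zc * cc * 2 powr e = Gamma (real b) / 2 * (2 powr e / 2 powr (real a - 1))"
    proof -
      have "Gamma ((1 + (real a + real b))/2) > 0" by (rule Gamma_real_pos) simp
      then have "Gamma ((1 + (real a + real b))/2) \<noteq> 0" by (metis less_irrefl)
      moreover have "Gamma (real a) > 0" "Gamma (real a + real b) > 0" using ab by auto
      ultimately
      show ?thesis unfolding Bc_val Zc_val cc_val Beta_def by (simp add: field_simps)
    qed
    also have "\<dots> = L" unfolding G pw L_def using ab by (simp add: field_simps)
    finally have "Bc * Zc * cc * 2 powr e = L" .
    moreover have "L > 0" unfolding L_def by simp
    ultimately show ?thesis unfolding R_def by simp
  qed
  have lim: "((\<lambda>t. J (t/2) * R) \<longlongrightarrow> L * R) at_top"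
  proof -
    have "filterlim (\<lambda>t::real. t/2) at_top at_top" by real_asymp
    from filterlim_compose[OF J_lim[of "a+b" b] this]
    have "((\<lambda>t. J (t/2)) \<longlongrightarrow> L) at_top" unfolding J_def L_def .
    then show ?thesis by (intro tendsto_intros)
  qed
  have "((\<lambda>t. measure M {\<omega> \<in> space M. 2 * B \<omega> * Z \<omega> > t} / g t) \<longlongrightarrow> 1) at_top"
  proof -
    have "eventually (\<lambda>t. J (t/2) * R = measure M {\<omega> \<in> space M. 2 * B \<omega> * Z \<omega> > t} / g t) at_top"
      using eventually_ge_at_top[of "2::real"]
    proof eventually_elim
      case (elim t)
      then have "measure M {\<omega> \<in> space M. 2 * B \<omega> * Z \<omega> > t} / g t = J (t/2) * (pref (t/2) / g t)"
        using formula[OF elim] by simp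
      also have "\<dots> = J (t/2) * R" using ratio[of t] elim by simp
      finally show ?case ..
    qed
    with lim show ?thesis unfolding LR by (rule Lim_transform_eventually)
  qed
  then show ?thesis unfolding g_def cc_def e_def by (rule asymp_equivI')
qed

end
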